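(* Let $d\ge5$ and let $q_1,\ldots,q_d$ be real numbers with $|q_i|\ge e^e$, of which $r\ge1$ are positive and $s\ge1$ negative, $r+s=d$. With $P$, $q_0$, $q$, $|Q|$, $S_j$ as defined below, $$\int_{(8dP)^{-1}q^{-1/2}}^{(8dP)^{-1}q_0^{-1/2}} |S_1(\alpha)\cdots S_d(\alpha)|\,\mathrm{d}\alpha \le C\, q^{1/2}|Q|^{-1/2} P^{d-3}\log P,$$ where $C$ depends only on $d$.
   Context: Notation: $e(x)=\exp(2\pi i x)$; $q_0 = \min_j|q_j|$, $q = \max_j|q_j|$, $|Q| = \prod_{j=1}^d|q_j|$; $S_j(\alpha) = \sum_{m\in\mathbb{Z},\ P < |q_j|^{1/2} m < 2dP} e(\alpha q_j m^2)$. The parameter $P$ is $P = \exp\{(1 + \tfrac{10 d^2}{\log\log H})\log H\}$ with $H = C_d\, q^{\frac12+\beta}$, $C_d\ge1$ a constant depending on $d$, and $\beta$ given, with $r'=\max(r,s)$, $s'=\min(r,s)$, by $\beta = \frac{r'}{2s'}$ if $r'\ge s'+3$, $\beta=\frac{s'+2}{2(s'-1)}$ if $r'\in\{s'+1,s'+2\}$, $\beta = \frac{s'+1}{2(s'-2)}$ if $r'=s'$. *)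

theory Defs
  imports "HOL-Analysis.Analysis"
begin

definition ee :: "real \<Rightarrow> complex" where
  "ee x = exp (2 * of_real pi * \<i> * of_real x)"

definition beta_exp :: "nat \<Rightarrow> nat \<Rightarrow> real" where
  "beta_exp r s = (let r' = max r s; s' = min r s in
     if r' \<ge> s' + 3 then real r' / (2 * real s')
     else if r' = s' + 1 \<or> r' = s' + 2 then (real s' + 2) / (2 * (real s' - 1))
     else (real s' + 1) / (2 * (real s' - 2)))"

definition Hpar :: "real \<Rightarrow> real \<Rightarrow> real \<Rightarrow> real" where
  "Hpar Cd qmax beta = Cd * qmax powr (1/2 + beta)"

definition Ppar :: "nat \<Rightarrow> real \<Rightarrow> real" where
  "Ppar d H = exp ((1 + 10 * real d ^ 2 / ln (ln H)) * ln H)"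

definition Sexp :: "nat \<Rightarrow> real \<Rightarrow> real \<Rightarrow> real \<Rightarrow> complex" where
  "Sexp d P qj \<alpha> =
     (\<Sum>m\<in>{m::int. P < sqrt \<bar>qj\<bar> * of_int m \<and> sqrt \<bar>qj\<bar> * of_int m < 2 * real d * P}.
        ee (\<alpha> * qj * of_int m ^ 2))"

end

theory Submission
  imports Defs
begin

lemma tan_ge_self: assumes "0 \<le> x" "x < pi/2" shows "x \<le> tan x"
proof -
  have "(\<lambda>t. tan t - t) 0 \<le> (\<lambda>t. tan t - t) x"
  proof (rule DERIV_nonneg_imp_increasing_open[OF assms(1)])
    fix t assume t: "0 < t" "t < x"
    have c: "cos t \<noteq> 0" using t assms cos_gt_zero_pi[of t] by auto
    have c2: "0 < (cos t)^2 " "(cos t)^2 \<le> 1" using c by (auto simp: abs_square_le_1)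
    show "\<exists>y. DERIV (\<lambda>t. tan t - t) t :> y \<and> 0 \<le> y"
      apply (rule exI[of _ "inverse ((cos t)\<^sup>2) - 1"])
      using c c2 by (auto intro!: derivative_eq_intros simp: field_simps)
  next
    show "continuous_on {0..x} (\<lambda>t. tan t - t)"
    proof (intro continuous_intros ballI)
      fix t assume "t \<in> {0..x}"
      then show "cos t \<noteq> 0" using assms cos_gt_zero_pi[of t] by auto
    qed
  qed
  then show ?thesis by simp
qed

lemma cot_le_inv0: assumes "0 < x" "x < pi/2" shows "cos x / sin x \<le> 1 / x"
proof -
  have s: "sin x > 0" using assms sin_gt_zero[of x] by auto
  have c: "cos x > 0" using assms cos_gt_zero_pi[of x] by auto
  have "x \<le> sin x / cos x" using tan_ge_self[of x] assms by (simp add: tan_def)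
  then show ?thesis using s c assms by (simp add: field_simps)
qed

lemma cot_le_inv: assumes "0 < x" "x \<le> pi/2" shows "cos x / sin x \<le> 1 / x"
proof (cases "x = pi/2")
  case True
  then have "cos x = 0" by (simp only: cos_pi_half)
  then show ?thesis using assms by simp
next
  case False then show ?thesis using assms cot_le_inv0 by simp
qed

lemma cot_antimono: assumes "0 < x" "x \<le> y" "y < pi"
  shows "cos y / sin y \<le> cos x / sin x"
proof -
  have sx: "sin x > 0" using assms sin_gt_zero[of x] by auto
  have sy: "sin y > 0" using assms sin_gt_zero[of y] by auto
  have "sin (y - x) \<ge> 0" using assms sin_ge_zero[of "y-x"] by auto
  then have "cos y * sin x \<le> cos x * sin y" by (simp add: sin_diff algebra_simps)
  then show ?thesis using sx sy by (simp add: field_simps)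
qed

lemma ee_add: "ee (a + b) = ee a * ee b"
  unfolding ee_def by (simp add: distrib_left exp_add[symmetric])

lemma ee_cis: "ee x = cis (2 * pi * x)"
  unfolding ee_def cis_conv_exp by (simp add: mult_ac)

lemma norm_ee[simp]: "norm (ee x) = 1"
  by (simp add: ee_cis)

lemma g_identity:
  assumes "0 < D" "D < 1"
  shows "1 / (ee D - 1) = - (1/2) - \<i> * of_real (cos (pi*D) / sin (pi*D) / 2)"
proof -
  define u where "u = pi * D"
  have s: "sin u \<noteq> 0" using assms sin_gt_zero[of u] by (auto simp: u_def)
  have e: "ee D = Complex (cos (2*u)) (sin (2*u))" by (simp add: ee_cis cis.ctr u_def mult_ac)
  have "(ee D - 1) * (- (1/2) - \<i> * of_real (cos u / sin u / 2)) = 1"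
  proof -
    have q: "(cos u)^2 + (sin u)^2 = 1" by simp
    have "(ee D - 1) * (- (1/2) - \<i> * of_real (cos u / sin u / 2))
       = Complex ((1 - 2 * (sin u)^2 - 1) * (-1/2) + 2 * sin u * cos u * (cos u / sin u / 2))
                 ((1 - 2 * (sin u)^2 - 1) * (-(cos u / sin u / 2)) + 2 * sin u * cos u * (-1/2))"
      unfolding e cos_double_sin sin_double by (simp add: complex_eq_iff)
    also have "\<dots> = Complex ((sin u)^2 + (cos u)^2) 0"
      using s by (simp add: field_simps power2_eq_square)
    also have "\<dots> = 1" using q by (simp add: add.commute complex_eq_iff)
    finally show ?thesis .
  qed
  then have "inverse (ee D - 1) = - (1/2) - \<i> * of_real (cos u / sin u / 2)"
    by (rule inverse_unique)
  then show ?thesis unfolding u_def by (simp add: inverse_eq_divide)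
qed

lemma abel_sum:
  fixes g z :: "nat \<Rightarrow> complex"
  assumes "n \<ge> 1"
  shows "(\<Sum>k<n. g k * (z (Suc k) - z k)) = g (n-1) * z n - g 0 * z 0 - (\<Sum>k\<in>{1..<n}. (g k - g (k-1)) * z k)"
  using assms
proof (induction n rule: nat_induct_at_least)
  case base then show ?case by (simp add: algebra_simps)
next
  case (Suc n)
  have "{1..<Suc n} = insert n {1..<n}" using Suc.hyps by auto
  then have "(\<Sum>k\<in>{1..<Suc n}. (g k - g (k-1)) * z k) = (g n - g (n-1)) * z n + (\<Sum>k\<in>{1..<n}. (g k - g (k-1)) * z k)"
    by simp
  then show ?case using Suc.IH by (simp add: algebra_simps)
qed

lemma norm3: "norm ((A1::complex) - A2 - A3) \<le> norm A1 + norm A2 + norm A3"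
  using norm_triangle_ineq4[of "A1-A2" A3] norm_triangle_ineq4[of A1 A2] by linarith

lemma KL:
  fixes \<theta> :: real and lo :: int and n :: nat
  assumes th: "\<theta> > 0" and lo: "lo \<ge> 1" and hi: "\<theta> * (2 * (of_int lo + real n) - 3) \<le> 1/2"
  shows "norm (\<Sum>k<n. ee (\<theta> * (of_int lo + real k)^2)) \<le> 1 / (\<theta> * of_int lo)"
proof -
  define L where "L = real_of_int lo"
  have L1: "L \<ge> 1" using lo by (simp add: L_def)
  have thL: "\<theta> * L > 0" using th L1 by simp
  show ?thesis
  proof (cases n)
    case 0 then show ?thesis using thL by (simp add: L_def)
  next
    case (Suc m)
    define z where "z k = ee (\<theta> * (L + real k)^2)" for k
    define D where "D k = \<theta> * (2 * (L + real k) + 1)" for k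
    define c where "c k = cos (pi * D k) / sin (pi * D k)" for k
    define g where "g k = 1 / (ee (D k) - 1)" for k
    have Dpos: "D k > 0" for k using th L1 by (simp add: D_def)
    have Dle: "D k \<le> 1/2" if "k < m" for k
    proof -
      have "D k \<le> D (m - 1)" using th that by (simp add: D_def)
      also have "D (m-1) = \<theta> * (2 * (L + real n) - 3)" using that Suc by (simp add: D_def of_nat_diff algebra_simps)
      finally show ?thesis using hi by (simp add: L_def)
    qed
    have Dmono: "D 0 \<le> D k" for k using th by (simp add: D_def)
    have zS: "z (Suc k) = z k * ee (D k)" for k
      by (simp add: z_def D_def ee_add[symmetric] algebra_simps power2_eq_square)
    have gform: "g k = - (1/2) - \<i> * of_real (c k / 2)" if "k < m" for k
      unfolding g_def c_def using g_identity[of "D k"] Dpos[of k] Dle[OF that] by simp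
    have ne: "ee (D k) - 1 \<noteq> 0" if "k < m" for k
    proof
      assume "ee (D k) - 1 = 0"
      then have "g k = 0" by (simp add: g_def)
      then show False using gform[OF that] by (simp add: complex_eq_iff)
    qed
    have zg: "z k = g k * (z (Suc k) - z k)" if "k < m" for k
      using ne[OF that] by (simp add: zS g_def field_simps)
    have c0: "c k \<ge> 0" if "k < m" for k
    proof -
      have "0 < pi * D k" "pi * D k \<le> pi / 2" using Dpos[of k] Dle[OF that] by auto
      moreover have "-(pi/2) \<le> pi * D k" using pi_gt_zero \<open>0 < pi * D k\<close> by linarith
      ultimately have "sin (pi * D k) > 0" "cos (pi * D k) \<ge> 0"
        by (auto intro!: sin_gt_zero cos_ge_zero)
      then show ?thesis by (simp add: c_def)
    qed
    have cmono: "c k \<le> c j" if "j \<le> k" "k < m" for j k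
    proof -
      have "pi * D j \<le> pi * D k" using that th by (simp add: D_def)
      moreover have "pi * D k < pi" using Dle[OF that(2)] by simp
      ultimately show ?thesis unfolding c_def using Dpos[of j] by (intro cot_antimono) auto
    qed
    have normg: "norm (g k) \<le> 1/2 + c k / 2" if "k < m" for k
    proof -
      have "norm (g k) \<le> norm (- (1/2::complex)) + norm (\<i> * of_real (c k / 2))"
        unfolding gform[OF that] by (rule norm_triangle_ineq4)
      also have "\<dots> = 1/2 + c k / 2" using c0[OF that] by (simp add: norm_mult)
      finally show ?thesis .
    qed
    have normdg: "norm (g k - g (k-1)) = (c (k-1) - c k) / 2" if "1 \<le> k" "k < m" for k
    proof -
      have km1: "k - 1 < m" using that by simp
      have "g k - g (k-1) = (- (1/2) - \<i> * of_real (c k / 2)) - (- (1/2) - \<i> * of_real (c (k-1) / 2))"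
        using gform[OF that(2)] gform[OF km1] by simp
      also have "\<dots> = - \<i> * of_real ((c k - c (k-1)) / 2)"
        by (simp add: algebra_simps diff_divide_distrib)
      finally have "g k - g (k-1) = - \<i> * of_real ((c k - c (k-1)) / 2)" .
      then have "norm (g k - g (k-1)) = \<bar>c k - c (k-1)\<bar> / 2"
        by (simp only: norm_mult norm_minus_cancel norm_ii norm_of_real norm_divide) simp
      then show ?thesis using cmono[of "k-1" k] that by simp
    qed
    have sum_split: "(\<Sum>k<n. z k) = (\<Sum>k<m. g k * (z (Suc k) - z k)) + z m"
      using Suc zg by simp
    have D0: "D 0 = \<theta> * (2 * L + 1)" by (simp add: D_def)
    have orig: "(\<Sum>k<n. ee (\<theta> * (of_int lo + real k)^2)) = (\<Sum>k<n. z k)"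
      by (simp add: z_def L_def)
    show ?thesis
    proof (cases "m = 0")
      case True
      then have "n = 1" using Suc by simp
      moreover have "\<theta> * (L - 1) \<ge> 0" using L1 th by simp
      ultimately have "\<theta> * L \<le> 1" using hi by (simp add: L_def algebra_simps)
      then have "1 \<le> 1 / (\<theta> * L)" using thL by simp
      moreover have "(\<Sum>k<n. z k) = z 0" using Suc True by simp
      moreover have "norm (z 0) = 1" by (simp add: z_def)
      ultimately have "norm (\<Sum>k<n. z k) \<le> 1 / (\<theta> * L)" by simp
      then show ?thesis using orig by (simp add: L_def)
    next
      case False
      then have m1: "m \<ge> 1" by simp
      have "norm (\<Sum>k<m. g k * (z (Suc k) - z k)) \<le>
        norm (g (m-1) * z m) + norm (g 0 * z 0) + norm (\<Sum>k\<in>{1..<m}. (g k - g (k-1)) * z k)"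
        unfolding abel_sum[OF m1] by (rule norm3)
      also have "\<dots> \<le> (1/2 + c 0 / 2) + (1/2 + c 0 / 2) + (\<Sum>k\<in>{1..<m}. (c (k-1) - c k) / 2)"
      proof (intro add_mono)
        show "norm (g (m-1) * z m) \<le> 1/2 + c 0 / 2"
          using normg[of "m-1"] cmono[of 0 "m-1"] m1 by (simp add: norm_mult z_def)
        show "norm (g 0 * z 0) \<le> 1/2 + c 0 / 2"
          using normg[of 0] m1 by (simp add: norm_mult z_def)
        have "norm (\<Sum>k\<in>{1..<m}. (g k - g (k-1)) * z k) \<le> (\<Sum>k\<in>{1..<m}. norm ((g k - g (k-1)) * z k))"
          by (rule norm_sum)
        also have "\<dots> = (\<Sum>k\<in>{1..<m}. (c (k-1) - c k) / 2)"
        proof (intro sum.cong refl)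
          fix k assume k: "k \<in> {1..<m}"
          have "norm ((g k - g (k-1)) * z k) = norm (g k - g (k-1))" by (simp add: norm_mult z_def)
          also have "\<dots> = (c (k-1) - c k) / 2" using k by (intro normdg) auto
          finally show "norm ((g k - g (k-1)) * z k) = (c (k-1) - c k) / 2" .
        qed
        finally show "norm (\<Sum>k\<in>{1..<m}. (g k - g (k-1)) * z k) \<le> (\<Sum>k\<in>{1..<m}. (c (k-1) - c k) / 2)" .
      qed
      also have "(\<Sum>k\<in>{1..<m}. (c (k-1) - c k) / 2) = (c 0 - c (m-1)) / 2"
      proof -
        have "{1..<m} = {Suc 0..m-1}" using m1 by auto
        then have "(\<Sum>k\<in>{1..<m}. (c (k-1) - c k) / 2) = - (\<Sum>k\<in>{Suc 0..m-1}. c k - c (k-1)) / 2"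
          by (simp add: sum_divide_distrib[symmetric] sum_negf[symmetric])
        also have "\<dots> = (c 0 - c (m-1)) / 2" by (subst sum_telescope'') auto
        finally show ?thesis .
      qed
      finally have A: "norm (\<Sum>k<m. g k * (z (Suc k) - z k)) \<le> 1 + c 0 + (c 0 - c (m-1)) / 2" by simp
      have cm: "c (m-1) \<ge> 0" using c0[of "m-1"] m1 by simp
      have zm: "norm (z m) = 1" by (simp add: z_def)
      have "norm (\<Sum>k<n. z k) \<le> norm (\<Sum>k<m. g k * (z (Suc k) - z k)) + norm (z m)"
        unfolding sum_split by (rule norm_triangle_ineq)
      then have B1: "norm (\<Sum>k<n. z k) \<le> 2 + (c 0 + (c 0 - c (m-1)) / 2)"
        using A zm by linarith
      have B2: "c 0 + (c 0 - c (m-1)) / 2 \<le> 3/2 * c 0" using cm by (simp add: field_simps)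
      have B: "norm (\<Sum>k<n. z k) \<le> 2 + 3/2 * c 0"
        using B1 B2 by linarith
      define iD where "iD = 1 / D 0"
      have "c 0 \<le> 1 / (pi * D 0)"
        unfolding c_def using Dpos[of 0] Dle[of 0] m1 by (intro cot_le_inv) auto
      also have "\<dots> \<le> 1 / (3 * D 0)" using Dpos[of 0] pi_gt3
        by (intro divide_left_mono mult_right_mono) auto
      also have "\<dots> = iD / 3" by (simp add: iD_def)
      finally have C: "c 0 \<le> iD / 3" .
      have D0le: "D 0 \<le> 1/2" using Dle[of 0] m1 by simp
      have "2 \<le> 1 / D 0" using D0le Dpos[of 0] by (simp add: le_divide_eq)
      then have C2: "2 \<le> iD" by (simp add: iD_def)
      have "2 * (\<theta> * L) \<le> D 0" unfolding D0 using th by simp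
      then have "iD \<le> 1 / (2 * (\<theta> * L))" unfolding iD_def using thL
        by (intro divide_left_mono) auto
      also have "\<dots> = (1 / (\<theta> * L)) / 2" by simp
      finally have C3: "iD \<le> (1 / (\<theta> * L)) / 2" .
      obtain u where ud: "u = 1 / (\<theta> * L)" by blast
      have u: "u > 0" using thL ud by simp
      have C3': "2 * iD \<le> u" using C3[folded ud] by linarith
      obtain cc where ccd: "cc = c 0" by blast
      obtain nn where nnd: "nn = norm (\<Sum>k<n. z k)" by blast
      have "nn \<le> u" using B[folded nnd ccd] C[folded ccd] C2 C3' u by linarith
      then have "norm (\<Sum>k<n. z k) \<le> 1 / (\<theta> * L)" using ud nnd by simp
      then show ?thesis using orig by (simp add: L_def)
    qed
  qed
qed

lemma harm_le_ln: "n \<ge> 1 \<Longrightarrow> harm n \<le> 1 + ln (real n)"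
proof (induction n rule: nat_induct_at_least)
  case base then show ?case by (simp add: harm_def)
next
  case (Suc n)
  have n: "real n \<ge> 1" using Suc.hyps by simp
  have "ln (real n / (real n + 1)) \<le> real n / (real n + 1) - 1"
    using n by (intro ln_le_minus_one) auto
  also have "\<dots> = - 1 / (real n + 1)" using n by (simp add: field_simps)
  finally have "1 / (real n + 1) \<le> ln (real n + 1) - ln (real n)"
    using n by (simp add: ln_div)
  then show ?case using Suc.IH by (simp add: harm_Suc inverse_eq_divide add.commute)
qed

lemma dist_sum:
  assumes "i < N"
  shows "(\<Sum>j\<in>{..<N} - {i}. 1 / \<bar>real i - real j\<bar>) \<le> 2 * (1 + ln (real N))"
proof -
  have split: "{..<N} - {i} = {..<i} \<union> {Suc i..<N}" using assms by auto
  have "(\<Sum>j\<in>{..<N} - {i}. 1 / \<bar>real i - real j\<bar>) =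
        (\<Sum>j<i. 1 / \<bar>real i - real j\<bar>) + (\<Sum>j\<in>{Suc i..<N}. 1 / \<bar>real i - real j\<bar>)"
    unfolding split by (rule sum.union_disjoint) auto
  also have "(\<Sum>j<i. 1 / \<bar>real i - real j\<bar>) = harm i"
  proof -
    have "(\<Sum>j<i. 1 / \<bar>real i - real j\<bar>) = (\<Sum>j<i. 1 / \<bar>real i - real (i - Suc j)\<bar>)"
      by (rule sum.nat_diff_reindex[symmetric])
    also have "\<dots> = (\<Sum>j<i. inverse (real (Suc j)))"
      by (intro sum.cong refl) (auto simp: of_nat_diff inverse_eq_divide)
    finally show ?thesis by (simp add: harm_altdef)
  qed
  also have "(\<Sum>j\<in>{Suc i..<N}. 1 / \<bar>real i - real j\<bar>) = harm (N - Suc i)"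
  proof -
    have "{Suc i..<N} = {0 + Suc i..<(N - Suc i) + Suc i}" using assms by simp
    then have "(\<Sum>j\<in>{Suc i..<N}. 1 / \<bar>real i - real j\<bar>) = (\<Sum>k\<in>{0..<N - Suc i}. 1 / \<bar>real i - real (k + Suc i)\<bar>)"
      by (simp only: sum.shift_bounds_nat_ivl)
    also have "\<dots> = (\<Sum>k<N - Suc i. inverse (real (Suc k)))"
      by (intro sum.cong) (auto simp: inverse_eq_divide)
    finally show ?thesis by (simp add: harm_altdef)
  qed
  also have "harm i + harm (N - Suc i) \<le> harm N + (harm N :: real)"
    using assms by (intro add_mono harm_mono) auto
  also have "\<dots> \<le> 2 * (1 + ln (real N))" using harm_le_ln[of N] assms by simp
  finally show ?thesis .
qed

lemma double_dist_sum:
  "(\<Sum>i<N. \<Sum>j\<in>{..<N} - {i}. 1 / \<bar>real i - real j\<bar>) \<le> real N * (2 * (1 + ln (real N)))"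
proof -
  have "(\<Sum>i<N. \<Sum>j\<in>{..<N} - {i}. 1 / \<bar>real i - real j\<bar>) \<le> (\<Sum>i<N. 2 * (1 + ln (real N)))"
    by (intro sum_mono dist_sum) auto
  then show ?thesis by simp
qed

lemma norm_sq_sum:
  fixes x :: "'i \<Rightarrow> real"
  shows "(norm (\<Sum>m\<in>M. ee (x m)))^2 = (\<Sum>m\<in>M. \<Sum>m'\<in>M. cos (2 * pi * (x m - x m')))"
proof -
  have re: "Re (\<Sum>m\<in>M. ee (x m)) = (\<Sum>m\<in>M. cos (2 * pi * x m))" by (simp add: ee_cis)
  have im: "Im (\<Sum>m\<in>M. ee (x m)) = (\<Sum>m\<in>M. sin (2 * pi * x m))" by (simp add: ee_cis Im_sum)
  have "(norm (\<Sum>m\<in>M. ee (x m)))^2 = (\<Sum>m\<in>M. cos (2 * pi * x m))^2 + (\<Sum>m\<in>M. sin (2 * pi * x m))^2"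
    by (simp add: cmod_power2 ee_cis)
  also have "\<dots> = (\<Sum>m\<in>M. \<Sum>m'\<in>M. cos (2 * pi * x m) * cos (2 * pi * x m') + sin (2 * pi * x m) * sin (2 * pi * x m'))"
    by (simp add: power2_eq_square sum_product sum.distrib)
  also have "\<dots> = (\<Sum>m\<in>M. \<Sum>m'\<in>M. cos (2 * pi * (x m - x m')))"
    by (simp add: cos_diff right_diff_distrib)
  finally show ?thesis .
qed

lemma integral_inv:
  fixes a b :: real
  assumes "0 < a" "a \<le> b"
  shows "((\<lambda>t. 1 / t) has_integral (ln b - ln a)) {a..b}"
proof -
  have "((\<lambda>t. 1 / t) has_integral (ln b - ln a)) {a..b}"
  proof (rule fundamental_theorem_of_calculus[of a b ln "\<lambda>t. 1 / t", OF assms(2)])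
    fix x assume x: "x \<in> {a..b}"
    then have "x > 0" using assms by auto
    then have "(ln has_real_derivative (1 / x)) (at x within {a..b})"
      by (auto intro!: derivative_eq_intros)
    then show "(ln has_vector_derivative (1 / x)) (at x within {a..b})"
      by (simp add: has_real_derivative_iff_has_vector_derivative)
  qed
  then show ?thesis .
qed

lemma cos_over_integrable:
  assumes "0 < a"
  shows "(\<lambda>t. cos (2 * pi * l * t) / t) integrable_on {a..b}"
  using assms by (intro integrable_continuous_interval continuous_intros) auto

lemma aux_deriv:
  fixes k x c s :: real
  assumes "k \<noteq> 0" "x \<noteq> 0"
  shows "(c * (0 * x + 1 * k) * (k * x) - s * (0 * x + 1 * k)) / (k * x * (k * x)) = c / x - s / (k * x^2)"
  using assms by (simp add: field_simps power2_eq_square)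

lemma aux_deriv2:
  fixes k x :: real
  assumes "k \<noteq> 0" "x \<noteq> 0"
  shows "(0 * (k * x) - - 1 * (0 * x + 1 * k)) / (k * x * (k * x)) = 1 / (k * x^2)"
  using assms by (simp add: field_simps power2_eq_square)

lemma osc_bound:
  assumes "0 < a" "a \<le> b" "l \<noteq> 0"
  shows "\<bar>integral {a..b} (\<lambda>t. cos (2 * pi * l * t) / t)\<bar> \<le> 1 / (pi * \<bar>l\<bar> * a)"
proof -
  define F where "F t = sin (2 * pi * l * t) / (2 * pi * l * t)" for t
  define h where "h t = sin (2 * pi * l * t) / (2 * pi * l * t^2)" for t
  define G where "G t = - 1 / (2 * pi * \<bar>l\<bar> * t)" for t
  have F: "((\<lambda>t. cos (2 * pi * l * t) / t - h t) has_integral (F b - F a)) {a..b}"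
  proof (rule fundamental_theorem_of_calculus[OF assms(2)])
    fix x assume x: "x \<in> {a..b}"
    then have x0: "x > 0" using assms by auto
    have "(F has_real_derivative (cos (2 * pi * l * x) / x - h x)) (at x within {a..b})"
      unfolding F_def h_def
      apply (rule derivative_eq_intros refl | simp)+
      using x0 assms(3) apply simp
      apply (rule aux_deriv)
      using x0 assms(3) pi_gt_zero by auto
    then show "(F has_vector_derivative (cos (2 * pi * l * x) / x - h x)) (at x within {a..b})"
      by (simp add: has_real_derivative_iff_has_vector_derivative)
  qed
  have G: "((\<lambda>t. 1 / (2 * pi * \<bar>l\<bar> * t^2)) has_integral (G b - G a)) {a..b}"
  proof (rule fundamental_theorem_of_calculus[OF assms(2)])
    fix x assume x: "x \<in> {a..b}"
    then have x0: "x > 0" using assms by auto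
    have "(G has_real_derivative (1 / (2 * pi * \<bar>l\<bar> * x^2))) (at x within {a..b})"
      unfolding G_def
      apply (rule derivative_eq_intros refl | simp)+
      using x0 assms(3) apply simp
      apply (rule aux_deriv2)
      using x0 assms(3) pi_gt_zero by auto
    then show "(G has_vector_derivative (1 / (2 * pi * \<bar>l\<bar> * x^2))) (at x within {a..b})"
      by (simp add: has_real_derivative_iff_has_vector_derivative)
  qed
  have hint: "h integrable_on {a..b}"
    unfolding h_def using assms by (intro integrable_continuous_interval continuous_intros) auto
  have hb: "norm (integral {a..b} h) \<le> G b - G a"
  proof -
    have "norm (integral {a..b} h) \<le> integral {a..b} (\<lambda>t. 1 / (2 * pi * \<bar>l\<bar> * t^2))"
    proof (rule integral_norm_bound_integral[OF hint])
      show "(\<lambda>t. 1 / (2 * pi * \<bar>l\<bar> * t^2)) integrable_on {a..b}" using G by blast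
      fix t assume t: "t \<in> {a..b}"
      then have t0: "t > 0" using assms by auto
      have "\<bar>sin (2 * pi * l * t)\<bar> \<le> 1" by (rule abs_sin_le_one)
      then show "norm (h t) \<le> 1 / (2 * pi * \<bar>l\<bar> * t^2)"
        unfolding h_def using t0 assms(3)
        by (simp add: abs_mult field_simps power2_eq_square)
    qed
    also have "\<dots> = G b - G a" using G by (rule integral_unique)
    finally show ?thesis .
  qed
  have d: "integral {a..b} (\<lambda>t. cos (2 * pi * l * t) / t - h t) = integral {a..b} (\<lambda>t. cos (2 * pi * l * t) / t) - integral {a..b} h"
    by (rule integral_diff[OF cos_over_integrable[OF assms(1)] hint])
  have "integral {a..b} (\<lambda>t. cos (2 * pi * l * t) / t - h t) = F b - F a" using F by (rule integral_unique)
  with d have eq: "integral {a..b} (\<lambda>t. cos (2 * pi * l * t) / t) = F b - F a + integral {a..b} h" by simp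
  have Fb: "\<bar>F t\<bar> \<le> 1 / (2 * pi * \<bar>l\<bar> * t)" if "t > 0" for t
  proof -
    have "\<bar>sin (2 * pi * l * t)\<bar> \<le> 1" by (rule abs_sin_le_one)
    then show ?thesis unfolding F_def using that assms(3)
      by (simp add: abs_mult field_simps)
  qed
  have "\<bar>integral {a..b} (\<lambda>t. cos (2 * pi * l * t) / t)\<bar> \<le> \<bar>F b\<bar> + \<bar>F a\<bar> + (G b - G a)"
    unfolding eq using hb by simp
  also have "\<dots> \<le> 1 / (2 * pi * \<bar>l\<bar> * b) + 1 / (2 * pi * \<bar>l\<bar> * a) + (G b - G a)"
    using Fb[of a] Fb[of b] assms by simp
  also have "\<dots> = 1 / (pi * \<bar>l\<bar> * a)"
    unfolding G_def using assms by (simp add: field_simps)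
  finally show ?thesis .
qed

lemma L2:
  fixes c a b R :: real and lo :: int and N :: nat
  assumes a0: "0 < a" and ab: "a \<le> b" and c: "c \<noteq> 0" and R: "R > 0" and lo: "real_of_int lo \<ge> R"
  shows "(\<lambda>t. (norm (\<Sum>k<N. ee (t * c * (of_int lo + real k)^2)))^2 / t) integrable_on {a..b}"
    and "integral {a..b} (\<lambda>t. (norm (\<Sum>k<N. ee (t * c * (of_int lo + real k)^2)))^2 / t)
          \<le> real N * (ln b - ln a) + real N * (2 * (1 + ln (real N))) / (2 * pi * R * \<bar>c\<bar> * a)"
proof -
  define x where "x k = (of_int lo + real k)^2" for k
  define l where "l i j = c * (x i - x j)" for i j
  define I where "I i j = integral {a..b} (\<lambda>t. cos (2 * pi * l i j * t) / t)" for i j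
  have feq: "(norm (\<Sum>k<N. ee (t * c * (of_int lo + real k)^2)))^2 / t
      = (\<Sum>i<N. \<Sum>j<N. cos (2 * pi * l i j * t) / t)" for t
  proof -
    have "(norm (\<Sum>k<N. ee (t * c * (of_int lo + real k)^2)))^2 = (\<Sum>i<N. \<Sum>j<N. cos (2 * pi * (t * c * x i - t * c * x j)))"
      unfolding x_def by (rule norm_sq_sum)
    also have "\<dots> = (\<Sum>i<N. \<Sum>j<N. cos (2 * pi * l i j * t))"
      by (simp add: l_def algebra_simps)
    finally show ?thesis by (simp add: sum_divide_distrib)
  qed
  have int1: "(\<lambda>t. cos (2 * pi * l i j * t) / t) integrable_on {a..b}" for i j
    using cos_over_integrable[OF a0] by blast
  have int2: "(\<lambda>t. \<Sum>j<N. cos (2 * pi * l i j * t) / t) integrable_on {a..b}" for i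
    by (rule integrable_sum) (auto intro: int1)
  have int3: "(\<lambda>t. \<Sum>i<N. \<Sum>j<N. cos (2 * pi * l i j * t) / t) integrable_on {a..b}"
    by (rule integrable_sum) (auto intro: int2)
  show "(\<lambda>t. (norm (\<Sum>k<N. ee (t * c * (of_int lo + real k)^2)))^2 / t) integrable_on {a..b}"
    unfolding feq by (rule int3)
  have ieq: "integral {a..b} (\<lambda>t. (norm (\<Sum>k<N. ee (t * c * (of_int lo + real k)^2)))^2 / t)
     = (\<Sum>i<N. \<Sum>j<N. I i j)"
    unfolding feq I_def
    by (simp add: integral_sum int1 int2)
  have diag: "I i i = ln b - ln a" for i
    unfolding I_def l_def using integral_inv[OF a0 ab] by (simp add: integral_unique)
  have off: "I i j \<le> 1 / (2 * pi * R * \<bar>c\<bar> * a) * (1 / \<bar>real i - real j\<bar>)" if "i \<noteq> j" for i j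
  proof -
    have ij: "\<bar>real i - real j\<bar> > 0" using that by simp
    have "x i - x j = (real i - real j) * (2 * of_int lo + real i + real j)"
      by (simp add: x_def power2_eq_square algebra_simps)
    moreover have "2 * of_int lo + real i + real j \<ge> 2 * R" using lo by simp
    ultimately have "\<bar>x i - x j\<bar> \<ge> \<bar>real i - real j\<bar> * (2 * R)"
      using R by (simp add: abs_mult mult_left_mono)
    then have lb: "\<bar>l i j\<bar> \<ge> 2 * R * \<bar>c\<bar> * \<bar>real i - real j\<bar>"
      unfolding l_def using c by (simp add: abs_mult mult_left_mono mult_ac)
    have pos: "2 * R * \<bar>c\<bar> * \<bar>real i - real j\<bar> > 0" using R c ij by simp
    then have lnz: "l i j \<noteq> 0" using lb by auto
    have "I i j \<le> \<bar>I i j\<bar>" by simp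
    also have "\<dots> \<le> 1 / (pi * \<bar>l i j\<bar> * a)" unfolding I_def by (rule osc_bound[OF a0 ab lnz])
    also have "\<dots> \<le> 1 / (pi * (2 * R * \<bar>c\<bar> * \<bar>real i - real j\<bar>) * a)"
      using lb pos a0 R by (intro divide_left_mono mult_right_mono mult_left_mono mult_pos_pos) auto
    also have "\<dots> = 1 / (2 * pi * R * \<bar>c\<bar> * a) * (1 / \<bar>real i - real j\<bar>)"
      by (simp add: field_simps)
    finally show ?thesis .
  qed
  define K where "K = 1 / (2 * pi * R * \<bar>c\<bar> * a)"
  have K0: "K \<ge> 0" unfolding K_def using R a0 by simp
  have rowb: "(\<Sum>j<N. I i j) \<le> (ln b - ln a) + K * (\<Sum>j\<in>{..<N} - {i}. 1 / \<bar>real i - real j\<bar>)" if "i < N" for i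
  proof -
    have "(\<Sum>j<N. I i j) = I i i + (\<Sum>j\<in>{..<N} - {i}. I i j)"
      using that by (subst sum.remove[of _ i]) auto
    also have "(\<Sum>j\<in>{..<N} - {i}. I i j) \<le> (\<Sum>j\<in>{..<N} - {i}. K * (1 / \<bar>real i - real j\<bar>))"
      unfolding K_def by (intro sum_mono off) auto
    finally show ?thesis by (simp add: diag sum_distrib_left)
  qed
  have "(\<Sum>i<N. \<Sum>j<N. I i j) \<le> (\<Sum>i<N. (ln b - ln a) + K * (\<Sum>j\<in>{..<N} - {i}. 1 / \<bar>real i - real j\<bar>))"
    by (intro sum_mono rowb) auto
  also have "\<dots> = real N * (ln b - ln a) + K * (\<Sum>i<N. \<Sum>j\<in>{..<N} - {i}. 1 / \<bar>real i - real j\<bar>)"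
    by (simp add: sum.distrib sum_distrib_left)
  also have "\<dots> \<le> real N * (ln b - ln a) + K * (real N * (2 * (1 + ln (real N))))"
    using K0 double_dist_sum[of N] by (intro add_left_mono mult_left_mono) auto
  finally show "integral {a..b} (\<lambda>t. (norm (\<Sum>k<N. ee (t * c * (of_int lo + real k)^2)))^2 / t)
          \<le> real N * (ln b - ln a) + real N * (2 * (1 + ln (real N))) / (2 * pi * R * \<bar>c\<bar> * a)"
    unfolding ieq K_def by simp
qed

definition loS :: "real \<Rightarrow> real \<Rightarrow> int" where
  "loS P qj = \<lfloor>P / sqrt \<bar>qj\<bar>\<rfloor> + 1"
definition NS :: "nat \<Rightarrow> real \<Rightarrow> real \<Rightarrow> nat" where
  "NS d P qj = nat (\<lceil>2 * real d * P / sqrt \<bar>qj\<bar>\<rceil> - 1 - loS P qj + 1)"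

lemma Sexp_set:
  assumes "qj \<noteq> 0"
  shows "{m::int. P < sqrt \<bar>qj\<bar> * of_int m \<and> sqrt \<bar>qj\<bar> * of_int m < 2 * real d * P}
       = (\<lambda>k. loS P qj + int k) ` {..<NS d P qj}"
proof -
  define s where "s = sqrt \<bar>qj\<bar>"
  have s: "s > 0" using assms by (simp add: s_def)
  have iff: "(P < s * of_int m \<and> s * of_int m < 2 * real d * P) \<longleftrightarrow>
      (loS P qj \<le> m \<and> m \<le> \<lceil>2 * real d * P / s\<rceil> - 1)" for m
  proof -
    have "P < s * of_int m \<longleftrightarrow> P / s < of_int m" using s by (simp add: pos_divide_less_eq mult.commute)
    also have "\<dots> \<longleftrightarrow> \<lfloor>P / s\<rfloor> < m" by (simp add: floor_less_iff)
    finally have "P < s * of_int m \<longleftrightarrow> \<lfloor>P / s\<rfloor> < m" .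
    then have 1: "P < s * of_int m \<longleftrightarrow> loS P qj \<le> m" by (auto simp: loS_def s_def)
    have "s * of_int m < 2 * real d * P \<longleftrightarrow> of_int m < 2 * real d * P / s" using s by (simp add: pos_less_divide_eq mult.commute)
    also have "\<dots> \<longleftrightarrow> m < \<lceil>2 * real d * P / s\<rceil>" by (simp add: less_ceiling_iff)
    finally have 2: "s * of_int m < 2 * real d * P \<longleftrightarrow> m \<le> \<lceil>2 * real d * P / s\<rceil> - 1" by simp
    show ?thesis using 1 2 by simp
  qed
  show ?thesis
  proof (intro set_eqI iffI)
    fix m assume "m \<in> {m::int. P < sqrt \<bar>qj\<bar> * of_int m \<and> sqrt \<bar>qj\<bar> * of_int m < 2 * real d * P}"
    then have h: "loS P qj \<le> m" "m \<le> \<lceil>2 * real d * P / s\<rceil> - 1" using iff[of m] by (auto simp: s_def)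
    then have "m = loS P qj + int (nat (m - loS P qj))" "nat (m - loS P qj) < NS d P qj"
      by (auto simp: NS_def s_def)
    then show "m \<in> (\<lambda>k. loS P qj + int k) ` {..<NS d P qj}" by blast
  next
    fix m assume "m \<in> (\<lambda>k. loS P qj + int k) ` {..<NS d P qj}"
    then obtain k where k: "k < NS d P qj" "m = loS P qj + int k" by auto
    then have "loS P qj \<le> m" "m \<le> \<lceil>2 * real d * P / s\<rceil> - 1" by (auto simp: NS_def s_def)
    then show "m \<in> {m::int. P < sqrt \<bar>qj\<bar> * of_int m \<and> sqrt \<bar>qj\<bar> * of_int m < 2 * real d * P}"
      using iff[of m] by (auto simp: s_def)
  qed
qed

lemma Sexp_reindex:
  assumes "qj \<noteq> 0"
  shows "Sexp d P qj \<alpha> = (\<Sum>k<NS d P qj. ee (\<alpha> * qj * (of_int (loS P qj) + real k)^2))"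
proof -
  have inj: "inj_on (\<lambda>k. loS P qj + int k) {..<NS d P qj}" by (auto simp: inj_on_def)
  show ?thesis unfolding Sexp_def Sexp_set[OF assms] sum.reindex[OF inj] by simp
qed

lemma loS_gt: "real_of_int (loS P qj) > P / sqrt \<bar>qj\<bar>"
  unfolding loS_def by linarith

lemma loS_ge1: "P > 0 \<Longrightarrow> loS P qj \<ge> 1"
  unfolding loS_def by (simp add: add_increasing2)

lemma NS_bound: assumes "P \<ge> 0" "d \<ge> 1"
  shows "real (NS d P qj) \<le> (2 * real d - 1) * P / sqrt \<bar>qj\<bar> + 1"
proof -
  have nn: "(2 * real d - 1) * P / sqrt \<bar>qj\<bar> + 1 \<ge> 0" using assms by simp
  have e: "(2 * real d - 1) * P / sqrt \<bar>qj\<bar> = 2 * real d * P / sqrt \<bar>qj\<bar> - P / sqrt \<bar>qj\<bar>"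
    by (simp add: diff_divide_distrib left_diff_distrib)
  have a: "real_of_int \<lceil>2 * real d * P / sqrt \<bar>qj\<bar>\<rceil> < 2 * real d * P / sqrt \<bar>qj\<bar> + 1" by linarith
  have b: "real_of_int (loS P qj) > P / sqrt \<bar>qj\<bar>" by (rule loS_gt)
  have "real (NS d P qj) \<le> max 0 (real_of_int (\<lceil>2 * real d * P / sqrt \<bar>qj\<bar>\<rceil> - 1 - loS P qj + 1))"
    unfolding NS_def by simp
  also have "\<dots> \<le> max 0 ((2 * real d - 1) * P / sqrt \<bar>qj\<bar> + 1)"
    using a b unfolding e by (intro max.mono) auto
  finally show ?thesis using nn by simp
qed

lemma NS_hi: "NS d P qj \<ge> 1 \<Longrightarrow> real_of_int (loS P qj) + real (NS d P qj) - 1 < 2 * real d * P / sqrt \<bar>qj\<bar>"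
proof -
  assume "NS d P qj \<ge> 1"
  then have "real (NS d P qj) = real_of_int (\<lceil>2 * real d * P / sqrt \<bar>qj\<bar>\<rceil> - 1 - loS P qj + 1)"
    unfolding NS_def by simp
  moreover have "real_of_int \<lceil>2 * real d * P / sqrt \<bar>qj\<bar>\<rceil> - 1 < 2 * real d * P / sqrt \<bar>qj\<bar>" by linarith
  ultimately show ?thesis by simp
qed

lemma NS_le: assumes "qj \<noteq> 0" "sqrt \<bar>qj\<bar> \<le> P" "d \<ge> 1"
  shows "real (NS d P qj) \<le> 2 * real d * P / sqrt \<bar>qj\<bar>"
proof -
  have s: "sqrt \<bar>qj\<bar> > 0" using assms by simp
  have P0: "P \<ge> 0" using assms(2) s by linarith
  have "1 \<le> P / sqrt \<bar>qj\<bar>" using assms s by simp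
  moreover have "(2 * real d - 1) * P / sqrt \<bar>qj\<bar> = 2 * real d * P / sqrt \<bar>qj\<bar> - P / sqrt \<bar>qj\<bar>"
    by (simp add: diff_divide_distrib left_diff_distrib)
  ultimately show ?thesis using NS_bound[OF P0 assms(3), of qj] by linarith
qed

lemma norm_sum_ee_abs:
  "norm (\<Sum>k\<in>K. ee (\<alpha> * qj * y k)) = norm (\<Sum>k\<in>K. ee (\<alpha> * \<bar>qj\<bar> * y k))"
proof (cases "qj \<ge> 0")
  case True then show ?thesis by simp
next
  case False
  then have t: "ee (\<alpha> * qj * y k) = cnj (ee (\<alpha> * \<bar>qj\<bar> * y k))" for k
    by (simp add: ee_cis cis_cnj)
  have "(\<Sum>k\<in>K. ee (\<alpha> * qj * y k)) = (\<Sum>k\<in>K. cnj (ee (\<alpha> * \<bar>qj\<bar> * y k)))"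
    using t by simp
  also have "\<dots> = cnj (\<Sum>k\<in>K. ee (\<alpha> * \<bar>qj\<bar> * y k))" by (rule cnj_sum[symmetric])
  finally show ?thesis by (simp only: complex_mod_cnj)
qed

lemma Sexp_trivial:
  assumes "qj \<noteq> 0" "sqrt \<bar>qj\<bar> \<le> P" "d \<ge> 1"
  shows "norm (Sexp d P qj \<alpha>) \<le> 2 * real d * P / sqrt \<bar>qj\<bar>"
proof -
  have "norm (Sexp d P qj \<alpha>) \<le> (\<Sum>k<NS d P qj. norm (ee (\<alpha> * qj * (of_int (loS P qj) + real k)^2)))"
    unfolding Sexp_reindex[OF assms(1)] by (rule norm_sum)
  also have "\<dots> = real (NS d P qj)" by simp
  finally show ?thesis using NS_le[OF assms] by simp
qed

lemma aux1: "(s::real) > 0 \<Longrightarrow> P / s * (w * (s * s)) = w * P * s"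
  by (simp add: field_simps)
lemma aux2: "(s::real) > 0 \<Longrightarrow> (w * (s * s)) * (4 * d * P / s) = 4 * d * w * P * s"
  by (simp add: field_simps)

lemma Sexp_KL:
  assumes q: "qj \<noteq> 0" and P: "P > 0" and d: "d \<ge> 1" and al: "\<alpha> > 0"
    and al2: "\<alpha> \<le> 1 / (8 * real d * P * sqrt \<bar>qj\<bar>)"
  shows "norm (Sexp d P qj \<alpha>) \<le> 1 / (\<alpha> * P * sqrt \<bar>qj\<bar>)"
proof -
  define a where "a = \<bar>qj\<bar>"
  define lo where "lo = loS P qj"
  define N where "N = NS d P qj"
  have a: "a > 0" using q by (simp add: a_def)
  have s: "sqrt a > 0" using a by simp
  have lo1: "lo \<ge> 1" using loS_ge1[OF P] by (simp add: lo_def)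
  have logt: "real_of_int lo > P / sqrt a" using loS_gt by (simp add: lo_def a_def)
  have eq: "norm (Sexp d P qj \<alpha>) = norm (\<Sum>k<N. ee ((\<alpha> * a) * (of_int lo + real k)^2))"
    unfolding Sexp_reindex[OF q] N_def lo_def a_def
    by (subst norm_sum_ee_abs) (simp add: mult.assoc)
  have th: "\<alpha> * a > 0" using al a by simp
  have target: "1 / ((\<alpha> * a) * of_int lo) \<le> 1 / (\<alpha> * P * sqrt a)"
  proof -
    have "P / sqrt a * (\<alpha> * a) \<le> of_int lo * (\<alpha> * a)" using logt th by (intro mult_right_mono) auto
    moreover have "P / sqrt a * (\<alpha> * a) = \<alpha> * P * sqrt a"
      using aux1[OF s, of P \<alpha>] a by simp
    ultimately have "\<alpha> * P * sqrt a \<le> (\<alpha> * a) * of_int lo" by (simp add: mult.commute)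
    moreover have "\<alpha> * P * sqrt a > 0" using al P s by simp
    ultimately show ?thesis by (intro divide_left_mono) auto
  qed
  show ?thesis
  proof (cases "N = 0")
    case True
    then show ?thesis using eq al P s by simp
  next
    case False
    have hi: "real_of_int lo + real N - 1 < 2 * real d * P / sqrt a"
      using NS_hi[of d P qj] False by (simp add: N_def lo_def a_def)
    have "(\<alpha> * a) * (2 * (of_int lo + real N) - 3) \<le> (\<alpha> * a) * (4 * real d * P / sqrt a)"
      using hi th by (intro mult_left_mono) auto
    also have "(\<alpha> * a) * (4 * real d * P / sqrt a) = 4 * real d * \<alpha> * P * sqrt a"
      using aux2[OF s, of \<alpha> "real d" P] a by simp
    also have "\<dots> \<le> 1/2"
    proof -
      have X: "8 * real d * P * sqrt a > 0" using d P s by simp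
      have "\<alpha> * (8 * real d * P * sqrt a) \<le> 1" using al2 pos_le_divide_eq[OF X] by (simp add: a_def)
      then show ?thesis by (simp add: mult_ac)
    qed
    finally have cond: "(\<alpha> * a) * (2 * (of_int lo + real N) - 3) \<le> 1/2" .
    have "norm (\<Sum>k<N. ee ((\<alpha> * a) * (of_int lo + real k)^2)) \<le> 1 / ((\<alpha> * a) * of_int lo)"
      by (rule KL[OF th lo1 cond])
    then show ?thesis using eq target a_def by simp
  qed
qed

definition K2 :: "nat \<Rightarrow> real" where "K2 d = 2 * real d * (1 + 8 * real d * (2 + 2 * real d))"

lemma Sexp_L2:
  assumes q: "1 \<le> \<bar>qj\<bar>" and d: "d \<ge> 1" and P: "P > 0" and Pq: "sqrt qm \<le> P" and aqm: "\<bar>qj\<bar> \<le> qm"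
    and lnP: "ln P \<ge> 1" and a1: "\<alpha>1 = 1 / (8 * real d * P * sqrt qm)" and a12: "\<alpha>1 \<le> \<alpha>2"
    and lnr: "ln \<alpha>2 - ln \<alpha>1 \<le> ln P"
  shows "(\<lambda>t. (norm (Sexp d P qj t))^2 / t) integrable_on {\<alpha>1..\<alpha>2}"
    and "\<bar>qj\<bar> * integral {\<alpha>1..\<alpha>2} (\<lambda>t. (norm (Sexp d P qj t))^2 / t) \<le> K2 d * P * sqrt qm * ln P"
proof -
  define a where "a = \<bar>qj\<bar>"
  define s where "s = sqrt a"
  define lo where "lo = loS P qj"
  define N where "N = NS d P qj"
  have a: "a > 0" using q by (simp add: a_def)
  have s: "s > 0" using a by (simp add: s_def)
  have s1: "s \<ge> 1" using q by (simp add: s_def a_def)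
  have q: "qj \<noteq> 0" using q by auto
  have qm0: "qm > 0" using a aqm by (simp add: a_def)
  have sq: "sqrt qm > 0" using qm0 by simp
  have sle: "s \<le> sqrt qm" using aqm by (simp add: s_def a_def)
  have sP: "s \<le> P" using sle Pq by simp
  have al1: "\<alpha>1 > 0" using a1 d P sq by simp
  have R: "P / s > 0" using P s by simp
  have lo: "real_of_int lo \<ge> P / s" using loS_gt[of P qj] by (simp add: lo_def s_def a_def)
  have feq: "(\<lambda>t. (norm (Sexp d P qj t))^2 / t) = (\<lambda>t. (norm (\<Sum>k<N. ee (t * qj * (of_int lo + real k)^2)))^2 / t)"
    by (simp add: Sexp_reindex[OF q] N_def lo_def)
  note L = L2[OF al1 a12 q R lo, of N]
  show "(\<lambda>t. (norm (Sexp d P qj t))^2 / t) integrable_on {\<alpha>1..\<alpha>2}"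
    unfolding feq by (rule L(1))
  have sa: "s * s = a" using a by (simp add: s_def)
  have Nle: "real N \<le> 2 * real d * P / s"
    using NS_le[OF q _ d, of P] sP by (simp add: N_def s_def a_def)
  have Ns: "real N * s \<le> 2 * real d * P" using Nle s by (simp add: field_simps)
  have aN: "a * real N \<le> 2 * real d * P * sqrt qm"
  proof -
    have "a * real N = s * (real N * s)" using sa by (simp add: mult_ac)
    also have "\<dots> \<le> sqrt qm * (2 * real d * P)"
      using sq s by (intro mult_mono[OF sle Ns]) auto
    finally show ?thesis by (simp add: mult_ac)
  qed
  define Lr where "Lr = ln \<alpha>2 - ln \<alpha>1"
  have Lr0: "Lr \<ge> 0" using a12 al1 by (simp add: Lr_def)
  have LrP: "Lr \<le> ln P" using lnr by (simp add: Lr_def)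
  define lN where "lN = 1 + ln (real N)"
  have lN: "lN \<le> (2 + 2 * real d) * ln P"
  proof (cases "N = 0")
    case True
    then have "lN = 1" by (simp add: lN_def)
    moreover have "1 * 1 \<le> (2 + 2 * real d) * ln P" using lnP
      by (intro mult_mono) auto
    ultimately show ?thesis by simp
  next
    case False
    have "2 * real d * P / s \<le> 2 * real d * P / 1" using s s1 d P
      by (intro divide_left_mono) auto
    then have "real N \<le> 2 * real d * P" using Nle by linarith
    then have "ln (real N) \<le> ln (2 * real d * P)" using False by (intro ln_mono) auto
    also have "\<dots> = ln (2 * real d) + ln P" using d P by (simp add: ln_mult)
    also have "ln (2 * real d) \<le> 2 * real d" using d ln_le_minus_one[of "2 * real d"] by simp
    finally have "lN \<le> 1 + 2 * real d + ln P" by (simp add: lN_def)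
    also have "\<dots> \<le> (2 + 2 * real d) * ln P"
    proof -
      have "(1 + 2 * real d) * 1 \<le> (1 + 2 * real d) * ln P" using lnP by (intro mult_left_mono) auto
      then show ?thesis by (simp add: algebra_simps)
    qed
    finally show ?thesis .
  qed
  have lN0: "lN \<ge> 0"
  proof (cases "N = 0")
    case True then show ?thesis by (simp add: lN_def)
  next
    case False then show ?thesis by (simp add: lN_def)
  qed
  have I: "integral {\<alpha>1..\<alpha>2} (\<lambda>t. (norm (Sexp d P qj t))^2 / t)
      \<le> real N * Lr + real N * (2 * lN) / (2 * pi * (P / s) * a * \<alpha>1)"
    unfolding feq Lr_def lN_def a_def using L(2) by simp
  have "a * integral {\<alpha>1..\<alpha>2} (\<lambda>t. (norm (Sexp d P qj t))^2 / t)
      \<le> a * (real N * Lr + real N * (2 * lN) / (2 * pi * (P / s) * a * \<alpha>1))"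
    using I a by (intro mult_left_mono) auto
  also have "\<dots> = (a * real N) * Lr + (real N * s) * lN * (8 * real d * sqrt qm) / pi"
  proof -
    have "a * (real N * (2 * lN) / (2 * pi * (P / s) * a * \<alpha>1)) = (real N * s) * lN * (8 * real d * sqrt qm) / pi"
      unfolding a1 using a s P d sq pi_gt_zero by (simp add: field_simps)
    then show ?thesis by (simp add: distrib_left)
  qed
  also have "\<dots> \<le> (2 * real d * P * sqrt qm) * ln P + (2 * real d * P) * ((2 + 2 * real d) * ln P) * (8 * real d * sqrt qm)"
  proof (intro add_mono)
    show "(a * real N) * Lr \<le> (2 * real d * P * sqrt qm) * ln P"
      using Lr0 P d sq by (intro mult_mono[OF aN LrP]) auto
    have X0: "0 \<le> (real N * s) * lN * (8 * real d * sqrt qm)" using s lN0 sq by simp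
    then have "(real N * s) * lN * (8 * real d * sqrt qm) / pi \<le> (real N * s) * lN * (8 * real d * sqrt qm) / 1"
      using pi_gt3 by (intro divide_left_mono) auto
    then have "(real N * s) * lN * (8 * real d * sqrt qm) / pi \<le> (real N * s) * lN * (8 * real d * sqrt qm)"
      by simp
    also have "\<dots> \<le> (2 * real d * P) * ((2 + 2 * real d) * ln P) * (8 * real d * sqrt qm)"
      using lN0 sq P by (intro mult_right_mono mult_mono[OF Ns lN]) auto
    finally show "(real N * s) * lN * (8 * real d * sqrt qm) / pi \<le> (2 * real d * P) * ((2 + 2 * real d) * ln P) * (8 * real d * sqrt qm)" .
  qed
  also have "\<dots> = K2 d * P * sqrt qm * ln P" by (simp add: K2_def algebra_simps)
  finally show "\<bar>qj\<bar> * integral {\<alpha>1..\<alpha>2} (\<lambda>t. (norm (Sexp d P qj t))^2 / t) \<le> K2 d * P * sqrt qm * ln P"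
    by (simp add: a_def)
qed

lemma prod_split3:
  fixes f :: "nat \<Rightarrow> 'a::comm_monoid_mult"
  assumes "finite A" "i \<in> A" "b \<in> A" "c \<in> A" "i \<noteq> b" "i \<noteq> c" "b \<noteq> c"
  shows "prod f A = f i * f b * f c * prod f (A - {i, b, c})"
proof -
  have "prod f A = f i * prod f (A - {i})" using assms by (simp add: prod.remove)
  also have "prod f (A - {i}) = f b * prod f (A - {i} - {b})" using assms by (simp add: prod.remove)
  also have "prod f (A - {i} - {b}) = f c * prod f (A - {i} - {b} - {c})" using assms by (simp add: prod.remove)
  also have "A - {i} - {b} - {c} = A - {i, b, c}" by auto
  finally show ?thesis by (simp add: mult_ac)
qed

lemma alg_final:
  fixes P x y z D R K S L :: real
  assumes "P > 0" "x > 0" "y > 0" "z > 0"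
  shows "(D * P ^ k * R) * (1 / (P * x)) * (1 / (2 * (y * z))) * (2 * K * P * S * L)
       = K * D * S * ((1 / x) * (1 / y) * (1 / z) * R) * P ^ k * L"
  using assms by (simp add: field_simps)

lemma amgm_bc:
  fixes u v ab ac :: real
  assumes "ab > 0" "ac > 0" "u \<ge> 0" "v \<ge> 0"
  shows "u * v \<le> (ab * u^2 + ac * v^2) / (2 * (sqrt ab * sqrt ac))"
proof -
  have "0 \<le> (sqrt ab * u - sqrt ac * v)^2" by simp
  then have "2 * (sqrt ab * u) * (sqrt ac * v) \<le> (sqrt ab * u)^2 + (sqrt ac * v)^2"
    by (simp add: power2_diff)
  also have "\<dots> = ab * u^2 + ac * v^2" using assms by (simp add: power_mult_distrib)
  finally have "(u * v) * (2 * (sqrt ab * sqrt ac)) \<le> ab * u^2 + ac * v^2" by (simp add: mult_ac)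
  moreover have "2 * (sqrt ab * sqrt ac) > 0" using assms by simp
  ultimately show ?thesis by (simp add: le_divide_eq)
qed

lemma Sexp_cont: "continuous_on S (\<lambda>\<alpha>. Sexp d P qj \<alpha>)"
  unfolding Sexp_def ee_def by (intro continuous_intros)

lemma main_bound:
  fixes q :: "nat \<Rightarrow> real" and d :: nat and P q0 qm :: real and i0 b c :: nat
  assumes d: "d \<ge> 3"
    and aj: "\<And>j. j \<in> {1..d} \<Longrightarrow> 1 \<le> \<bar>q j\<bar>"
    and q0le: "\<And>j. j \<in> {1..d} \<Longrightarrow> q0 \<le> \<bar>q j\<bar>"
    and qmle: "\<And>j. j \<in> {1..d} \<Longrightarrow> \<bar>q j\<bar> \<le> qm"
    and i0: "i0 \<in> {1..d}" "\<bar>q i0\<bar> = q0"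
    and bc: "b \<in> {1..d}" "c \<in> {1..d}" "i0 \<noteq> b" "i0 \<noteq> c" "b \<noteq> c"
    and P: "P > 0" "sqrt qm \<le> P" "ln P \<ge> 1"
  shows "integral {1 / (8 * real d * P * sqrt qm) .. 1 / (8 * real d * P * sqrt q0)}
          (\<lambda>\<alpha>. norm (\<Prod>j\<in>{1..d}. Sexp d P (q j) \<alpha>))
        \<le> (K2 d * (2 * real d) ^ (d - 3)) * sqrt qm * (\<Prod>i\<in>{1..d}. \<bar>q i\<bar>) powr (-1/2) * P ^ (d - 3) * ln P"
proof -
  define A where "A = {1..d}"
  define a where "a j = \<bar>q j\<bar>" for j
  define \<alpha>1 where "\<alpha>1 = 1 / (8 * real d * P * sqrt qm)"
  define \<alpha>2 where "\<alpha>2 = 1 / (8 * real d * P * sqrt q0)"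
  define Rest where "Rest = A - {i0, b, c}"
  define nS where "nS j \<alpha> = norm (Sexp d P (q j) \<alpha>)" for j \<alpha>
  define X where "X j \<alpha> = (nS j \<alpha>)^2 / \<alpha>" for j \<alpha>
  have finA: "finite A" by (simp add: A_def)
  have d1: "d \<ge> 1" using d by simp
  have a1: "a j \<ge> 1" if "j \<in> A" for j using aj that by (simp add: a_def A_def)
  have apos: "a j > 0" if "j \<in> A" for j using a1[OF that] by simp
  have qnz: "q j \<noteq> 0" if "j \<in> A" for j using a1[OF that] by (auto simp: a_def)
  have i0A: "i0 \<in> A" and bA: "b \<in> A" and cA: "c \<in> A" using i0 bc by (auto simp: A_def)
  have q01: "q0 \<ge> 1" using a1[OF i0A] i0 by (simp add: a_def)
  have q0qm: "q0 \<le> qm" using qmle[OF i0(1)] i0 by simp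
  have qm1: "qm \<ge> 1" using q01 q0qm by simp
  have sq0: "sqrt q0 \<ge> 1" using q01 by simp
  have sqm: "sqrt qm \<ge> 1" using qm1 by simp
  have al1: "\<alpha>1 > 0" unfolding \<alpha>1_def using P(1) d1 sqm by (intro divide_pos_pos mult_pos_pos) auto
  have a12: "\<alpha>1 \<le> \<alpha>2" unfolding \<alpha>1_def \<alpha>2_def using P d1 sq0 q0qm
    by (intro divide_left_mono mult_left_mono mult_pos_pos) auto
  have lnr: "ln \<alpha>2 - ln \<alpha>1 \<le> ln P"
  proof -
    have "ln \<alpha>2 - ln \<alpha>1 = ln (sqrt qm) - ln (sqrt q0)"
      unfolding \<alpha>1_def \<alpha>2_def using P(1) d1 sq0 sqm
      by (simp add: ln_div ln_mult less_imp_neq[symmetric])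
    also have "\<dots> \<le> ln (sqrt qm)" using sq0 by simp
    also have "\<dots> \<le> ln P" using P(2) sqm by (intro ln_mono) auto
    finally show ?thesis .
  qed
  note Lb = Sexp_L2[OF _ d1 P(1) P(2) _ P(3) \<alpha>1_def a12 lnr, of "q b"]
  note Lc = Sexp_L2[OF _ d1 P(1) P(2) _ P(3) \<alpha>1_def a12 lnr, of "q c"]
  have Xb_int: "X b integrable_on {\<alpha>1..\<alpha>2}" using Lb(1) a1[OF bA] qmle bc
    unfolding X_def nS_def by (auto simp: a_def)
  have Xc_int: "X c integrable_on {\<alpha>1..\<alpha>2}" using Lc(1) a1[OF cA] qmle bc
    unfolding X_def nS_def by (auto simp: a_def)
  have Xb_bd: "a b * integral {\<alpha>1..\<alpha>2} (X b) \<le> K2 d * P * sqrt qm * ln P"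
    using Lb(2) a1[OF bA] qmle bc unfolding X_def nS_def by (auto simp: a_def)
  have Xc_bd: "a c * integral {\<alpha>1..\<alpha>2} (X c) \<le> K2 d * P * sqrt qm * ln P"
    using Lc(2) a1[OF cA] qmle bc unfolding X_def nS_def by (auto simp: a_def)
  define Brest where "Brest = (\<Prod>j\<in>Rest. 2 * real d * P / sqrt (a j))"
  define W where "W = Brest * (1 / (P * sqrt q0)) * (1 / (2 * (sqrt (a b) * sqrt (a c))))"
  have Brest0: "Brest \<ge> 0" unfolding Brest_def using P(1) by (intro prod_nonneg) (auto simp: a_def)
  have W0: "W \<ge> 0" unfolding W_def using Brest0 P(1) sq0
    by (intro mult_nonneg_nonneg) (auto simp: a_def)
  define g where "g \<alpha> = W * (a b * X b \<alpha> + a c * X c \<alpha>)" for \<alpha>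
  have pw: "norm (\<Prod>j\<in>{1..d}. Sexp d P (q j) \<alpha>) \<le> g \<alpha>" if al: "\<alpha> \<in> {\<alpha>1..\<alpha>2}" for \<alpha>
  proof -
    have alpos: "\<alpha> > 0" using al al1 by simp
    have "norm (\<Prod>j\<in>{1..d}. Sexp d P (q j) \<alpha>) = (\<Prod>j\<in>A. nS j \<alpha>)"
      by (simp add: prod_norm[symmetric] nS_def A_def)
    also have "\<dots> = nS i0 \<alpha> * nS b \<alpha> * nS c \<alpha> * (\<Prod>j\<in>Rest. nS j \<alpha>)"
      unfolding Rest_def using finA i0A bA cA bc by (intro prod_split3) auto
    also have "\<dots> \<le> ((1 / (P * sqrt q0)) * (1 / \<alpha>)) * ((a b * (nS b \<alpha>)^2 + a c * (nS c \<alpha>)^2) / (2 * (sqrt (a b) * sqrt (a c)))) * Brest"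
    proof -
      have h0: "nS i0 \<alpha> \<le> (1 / (P * sqrt q0)) * (1 / \<alpha>)"
      proof -
        have "nS i0 \<alpha> \<le> 1 / (\<alpha> * P * sqrt \<bar>q i0\<bar>)" unfolding nS_def
          using qnz[OF i0A] P(1) d1 alpos al i0 unfolding \<alpha>2_def
          by (intro Sexp_KL) auto
        then show ?thesis using i0 by (simp add: mult_ac)
      qed
      have hbc: "nS b \<alpha> * nS c \<alpha> \<le> (a b * (nS b \<alpha>)^2 + a c * (nS c \<alpha>)^2) / (2 * (sqrt (a b) * sqrt (a c)))"
        using apos[OF bA] apos[OF cA] by (intro amgm_bc) (auto simp: nS_def)
      have hr: "(\<Prod>j\<in>Rest. nS j \<alpha>) \<le> Brest" unfolding Brest_def
      proof (intro prod_mono conjI)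
        fix j assume j: "j \<in> Rest"
        then have jA: "j \<in> A" by (simp add: Rest_def)
        show "0 \<le> nS j \<alpha>" by (simp add: nS_def)
        have "sqrt (a j) \<le> sqrt qm" using qmle jA by (simp add: a_def A_def)
        then have sP: "sqrt \<bar>q j\<bar> \<le> P" using order_trans[OF _ P(2)] by (simp add: a_def)
        show "nS j \<alpha> \<le> 2 * real d * P / sqrt (a j)" unfolding nS_def a_def
          by (rule Sexp_trivial[OF qnz[OF jA] sP d1])
      qed
      have "nS i0 \<alpha> * nS b \<alpha> * nS c \<alpha> = nS i0 \<alpha> * (nS b \<alpha> * nS c \<alpha>)" by (simp add: mult_ac)
      also have "\<dots> \<le> ((1 / (P * sqrt q0)) * (1 / \<alpha>)) * ((a b * (nS b \<alpha>)^2 + a c * (nS c \<alpha>)^2) / (2 * (sqrt (a b) * sqrt (a c))))"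
        using h0 hbc P(1) sq0 alpos by (intro mult_mono) (auto simp: nS_def)
      finally have h3: "nS i0 \<alpha> * nS b \<alpha> * nS c \<alpha> \<le> ((1 / (P * sqrt q0)) * (1 / \<alpha>)) * ((a b * (nS b \<alpha>)^2 + a c * (nS c \<alpha>)^2) / (2 * (sqrt (a b) * sqrt (a c))))" .
      have B0: "0 \<le> ((1 / (P * sqrt q0)) * (1 / \<alpha>)) * ((a b * (nS b \<alpha>)^2 + a c * (nS c \<alpha>)^2) / (2 * (sqrt (a b) * sqrt (a c))))"
        using P(1) sq0 alpos apos[OF bA] apos[OF cA] by (simp add: a_def)
      have R0: "0 \<le> (\<Prod>j\<in>Rest. nS j \<alpha>)" by (simp add: nS_def prod_nonneg)
      show ?thesis by (rule mult_mono[OF h3 hr B0 R0])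
    qed
    also have "\<dots> = g \<alpha>" unfolding g_def W_def X_def using alpos by (simp add: field_simps)
    finally show ?thesis .
  qed
  have lhs_int: "(\<lambda>\<alpha>. norm (\<Prod>j\<in>{1..d}. Sexp d P (q j) \<alpha>)) integrable_on {\<alpha>1..\<alpha>2}"
    by (intro integrable_continuous_interval continuous_intros Sexp_cont)
  have g_has: "(g has_integral (W * (a b * integral {\<alpha>1..\<alpha>2} (X b) + a c * integral {\<alpha>1..\<alpha>2} (X c)))) {\<alpha>1..\<alpha>2}"
    unfolding g_def
    by (intro has_integral_mult_right has_integral_add integrable_integral Xb_int Xc_int)
  have "integral {\<alpha>1..\<alpha>2} (\<lambda>\<alpha>. norm (\<Prod>j\<in>{1..d}. Sexp d P (q j) \<alpha>))
      \<le> W * (a b * integral {\<alpha>1..\<alpha>2} (X b) + a c * integral {\<alpha>1..\<alpha>2} (X c))"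
    by (rule has_integral_le[OF integrable_integral[OF lhs_int] g_has pw])
  also have "\<dots> \<le> W * (2 * K2 d * P * sqrt qm * ln P)"
    using Xb_bd Xc_bd W0 by (intro mult_left_mono) auto
  also have "\<dots> = (K2 d * (2 * real d) ^ (d - 3)) * sqrt qm * (\<Prod>i\<in>{1..d}. \<bar>q i\<bar>) powr (-1/2) * P ^ (d - 3) * ln P"
  proof -
    have cardR: "card Rest = d - 3"
    proof -
      have "card Rest = card A - card {i0, b, c}" unfolding Rest_def
        using i0A bA cA by (intro card_Diff_subset) auto
      moreover have "card {i0, b, c} = 3" using bc by auto
      ultimately show ?thesis by (simp add: A_def)
    qed
    have BR: "Brest = (2 * real d) ^ (d - 3) * P ^ (d - 3) * (\<Prod>j\<in>Rest. 1 / sqrt (a j))"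
      unfolding Brest_def by (simp add: prod.distrib cardR power_mult_distrib divide_inverse)
    have Qp: "(\<Prod>i\<in>{1..d}. \<bar>q i\<bar>) powr (-1/2) = (\<Prod>j\<in>A. 1 / sqrt (a j))"
      unfolding prod_powr_distrib A_def
    proof (intro prod.cong refl)
      fix j assume "j \<in> {1..d}"
      then have "a j > 0" using apos by (simp add: A_def)
      then show "\<bar>q j\<bar> powr (-1/2) = 1 / sqrt (a j)"
        by (simp add: a_def powr_minus_divide powr_half_sqrt)
    qed
    also have "\<dots> = (1 / sqrt (a i0)) * (1 / sqrt (a b)) * (1 / sqrt (a c)) * (\<Prod>j\<in>Rest. 1 / sqrt (a j))"
      unfolding Rest_def using finA i0A bA cA bc by (intro prod_split3) auto
    finally have Qp: "(\<Prod>i\<in>{1..d}. \<bar>q i\<bar>) powr (-1/2) = (1 / sqrt (a i0)) * (1 / sqrt (a b)) * (1 / sqrt (a c)) * (\<Prod>j\<in>Rest. 1 / sqrt (a j))" .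
    have sq0a: "sqrt q0 = sqrt (a i0)" using i0 by (simp add: a_def)
    show ?thesis unfolding W_def BR Qp sq0a
      using alg_final[OF P(1), of "sqrt (a i0)" "sqrt (a b)" "sqrt (a c)" "(2 * real d) ^ (d - 3)" "d - 3"
          "\<Prod>j\<in>Rest. 1 / sqrt (a j)" "K2 d" "sqrt qm" "ln P"]
        apos[OF i0A] apos[OF bA] apos[OF cA]
      by (simp add: mult_ac)
  qed
  finally show ?thesis unfolding \<alpha>1_def \<alpha>2_def .
qed

lemma beta_nonneg:
  assumes "r + s = d" "d \<ge> 5" "r \<ge> 1" "s \<ge> 1"
  shows "beta_exp r s \<ge> 0"
proof -
  define r' where "r' = max r s"
  define s' where "s' = min r s"
  have rs: "r' + s' = d" "s' \<le> r'" "s' \<ge> 1" using assms by (auto simp: r'_def s'_def)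
  have "(if r' \<ge> s' + 3 then real r' / (2 * real s')
     else if r' = s' + 1 \<or> r' = s' + 2 then (real s' + 2) / (2 * (real s' - 1))
     else (real s' + 1) / (2 * (real s' - 2))) \<ge> 0"
  proof (cases "r' \<ge> s' + 3")
    case True then show ?thesis by simp
  next
    case F1: False
    show ?thesis
    proof (cases "r' = s' + 1 \<or> r' = s' + 2")
      case True
      have "real s' - 1 \<ge> 0" using rs by simp
      then show ?thesis using F1 True by simp
    next
      case False
      then have "r' = s'" using F1 rs by auto
      then have "s' \<ge> 3" using rs assms by auto
      then have "real s' - 2 \<ge> 0" by simp
      then show ?thesis using F1 False by simp
    qed
  qed
  then show ?thesis unfolding beta_exp_def Let_def r'_def s'_def .
qed

lemma P_facts:
  fixes Cd qm \<beta> :: real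
  assumes qm: "qm \<ge> exp (exp 1)" and Cd: "Cd \<ge> 1" and b: "\<beta> \<ge> 0"
  shows "Ppar d (Hpar Cd qm \<beta>) > 0" "sqrt qm \<le> Ppar d (Hpar Cd qm \<beta>)" "ln (Ppar d (Hpar Cd qm \<beta>)) \<ge> 1"
proof -
  define H where "H = Hpar Cd qm \<beta>"
  have e2: "exp (1::real) \<ge> 2" using exp_ge_add_one_self[of "1::real"] by simp
  have ee1: "exp (exp (1::real)) \<ge> 1" by simp
  have qm1: "qm \<ge> 1" using qm ee1 by linarith
  have "qm powr (1/2) \<le> qm powr (1/2 + \<beta>)" using qm1 b by (intro powr_mono) auto
  then have "sqrt qm \<le> qm powr (1/2 + \<beta>)" using qm1 by (simp add: powr_half_sqrt)
  also have "\<dots> \<le> Cd * qm powr (1/2 + \<beta>)" using Cd by (simp add: mult_le_cancel_right1)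
  finally have Hq: "sqrt qm \<le> H" by (simp add: H_def Hpar_def)
  have "sqrt (exp (exp 1)) \<le> sqrt qm" using qm by simp
  moreover have "sqrt (exp (exp (1::real))) = exp (exp 1 / 2)"
  proof (rule real_sqrt_unique)
    have "(exp (exp (1::real) / 2))^2 = exp (exp 1 / 2 + exp 1 / 2)" by (simp add: power2_eq_square flip: exp_add)
    then show "(exp (exp (1::real) / 2))^2 = exp (exp 1)" by simp
  qed simp
  moreover have "exp (1::real) \<le> exp (exp 1 / 2)" using e2 by simp
  ultimately have He: "exp 1 \<le> H" using Hq by linarith
  have H0: "H > 0" using He exp_gt_zero[of 1] by linarith
  have lnH: "ln H \<ge> 1" using He H0 by (simp add: ln_ge_iff)
  have llH: "ln (ln H) \<ge> 0" using lnH by simp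
  define f where "f = 1 + 10 * real d ^ 2 / ln (ln H)"
  have f1: "f \<ge> 1" unfolding f_def using llH by simp
  have P: "Ppar d H = exp (f * ln H)" by (simp add: Ppar_def f_def)
  show "Ppar d (Hpar Cd qm \<beta>) > 0" using P by (simp add: H_def)
  have fl: "f * ln H \<ge> ln H" using f1 lnH by (simp add: mult_le_cancel_right1)
  then have "exp (ln H) \<le> exp (f * ln H)" by simp
  then have "H \<le> Ppar d H" using P H0 by simp
  then show "sqrt qm \<le> Ppar d (Hpar Cd qm \<beta>)" using Hq by (simp add: H_def)
  have "ln (Ppar d H) = f * ln H" using P by simp
  then show "ln (Ppar d (Hpar Cd qm \<beta>)) \<ge> 1" using fl lnH unfolding H_def by linarith
qed

theorem lemma2p6:
  fixes d :: nat and Cd :: real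
  assumes "d \<ge> 5" and "Cd \<ge> 1"
  shows "\<exists>C::real. \<forall>q :: nat \<Rightarrow> real.
    (\<forall>i\<in>{1..d}. \<bar>q i\<bar> \<ge> exp (exp 1)) \<longrightarrow>
    card {i\<in>{1..d}. q i > 0} \<ge> 1 \<longrightarrow>
    card {i\<in>{1..d}. q i < 0} \<ge> 1 \<longrightarrow>
    (let r = card {i\<in>{1..d}. q i > 0};
         s = card {i\<in>{1..d}. q i < 0};
         q0 = Min ((\<lambda>i. \<bar>q i\<bar>) ` {1..d});
         qm = Max ((\<lambda>i. \<bar>q i\<bar>) ` {1..d});
         Q = (\<Prod>i\<in>{1..d}. \<bar>q i\<bar>);
         P = Ppar d (Hpar Cd qm (beta_exp r s))
     in integral {1 / (8 * real d * P * sqrt qm) .. 1 / (8 * real d * P * sqrt q0)}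
          (\<lambda>\<alpha>. norm (\<Prod>j\<in>{1..d}. Sexp d P (q j) \<alpha>))
        \<le> C * sqrt qm * Q powr (-1/2) * P ^ (d - 3) * ln P)"
proof (rule exI[of _ "K2 d * (2 * real d) ^ (d - 3)"], intro allI impI)
  fix q :: "nat \<Rightarrow> real"
  assume h1: "\<forall>i\<in>{1..d}. \<bar>q i\<bar> \<ge> exp (exp 1)"
    and h2: "card {i\<in>{1..d}. q i > 0} \<ge> 1" and h3: "card {i\<in>{1..d}. q i < 0} \<ge> 1"
  define r where "r = card {i\<in>{1..d}. q i > 0}"
  define s where "s = card {i\<in>{1..d}. q i < 0}"
  define q0 where "q0 = Min ((\<lambda>i. \<bar>q i\<bar>) ` {1..d})"
  define qm where "qm = Max ((\<lambda>i. \<bar>q i\<bar>) ` {1..d})"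
  define P where "P = Ppar d (Hpar Cd qm (beta_exp r s))"
  have d3: "d \<ge> 3" using assms by simp
  have ee1: "exp (exp (1::real)) \<ge> 1" by simp
  have aj: "1 \<le> \<bar>q j\<bar>" if "j \<in> {1..d}" for j
  proof -
    have "exp (exp 1) \<le> \<bar>q j\<bar>" using h1 that by blast
    then show ?thesis using ee1 by linarith
  qed
  have fin: "finite ((\<lambda>i. \<bar>q i\<bar>) ` {1..d})" by simp
  have ne: "(\<lambda>i. \<bar>q i\<bar>) ` {1..d} \<noteq> {}" using assms by auto
  have q0le: "q0 \<le> \<bar>q j\<bar>" if "j \<in> {1..d}" for j unfolding q0_def using fin that by (intro Min_le) auto
  have qmle: "\<bar>q j\<bar> \<le> qm" if "j \<in> {1..d}" for j unfolding qm_def using fin that by (intro Max_ge) auto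
  obtain i0 where i0: "i0 \<in> {1..d}" "\<bar>q i0\<bar> = q0"
    using Min_in[OF fin ne] unfolding q0_def by auto
  obtain jm where jm: "jm \<in> {1..d}" "\<bar>q jm\<bar> = qm"
    using Max_in[OF fin ne] unfolding qm_def by auto
  define b where "b = (if i0 = 1 then 2 else (1::nat))"
  define c where "c = (if i0 = 3 then 2 else (3::nat))"
  have bc: "b \<in> {1..d}" "c \<in> {1..d}" "i0 \<noteq> b" "i0 \<noteq> c" "b \<noteq> c"
    using d3 by (auto simp: b_def c_def)
  have rs: "r + s = d"
  proof -
    have "{i\<in>{1..d}. q i > 0} \<union> {i\<in>{1..d}. q i < 0} = {1..d}"
      using aj by fastforce
    moreover have "card ({i\<in>{1..d}. q i > 0} \<union> {i\<in>{1..d}. q i < 0}) = r + s"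
      unfolding r_def s_def by (rule card_Un_disjoint) auto
    ultimately show ?thesis by simp
  qed
  have beta0: "beta_exp r s \<ge> 0"
    using beta_nonneg[OF rs assms(1)] h2 h3 by (simp add: r_def s_def)
  have qmbig: "qm \<ge> exp (exp 1)" using h1 jm by auto
  note PF = P_facts[OF qmbig assms(2) beta0, of d, folded P_def]
  have X: "integral {1 / (8 * real d * P * sqrt qm) .. 1 / (8 * real d * P * sqrt q0)}
          (\<lambda>\<alpha>. norm (\<Prod>j\<in>{1..d}. Sexp d P (q j) \<alpha>))
        \<le> (K2 d * (2 * real d) ^ (d - 3)) * sqrt qm * (\<Prod>i\<in>{1..d}. \<bar>q i\<bar>) powr (-1/2) * P ^ (d - 3) * ln P"
    apply (rule main_bound[of d q q0 qm i0 b c P])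
    using d3 aj q0le qmle i0 bc PF by auto
  then show "let r = card {i\<in>{1..d}. q i > 0};
         s = card {i\<in>{1..d}. q i < 0};
         q0 = Min ((\<lambda>i. \<bar>q i\<bar>) ` {1..d});
         qm = Max ((\<lambda>i. \<bar>q i\<bar>) ` {1..d});
         Q = (\<Prod>i\<in>{1..d}. \<bar>q i\<bar>);
         P = Ppar d (Hpar Cd qm (beta_exp r s))
     in integral {1 / (8 * real d * P * sqrt qm) .. 1 / (8 * real d * P * sqrt q0)}
          (\<lambda>\<alpha>. norm (\<Prod>j\<in>{1..d}. Sexp d P (q j) \<alpha>))
        \<le> (K2 d * (2 * real d) ^ (d - 3)) * sqrt qm * Q powr (-1/2) * P ^ (d - 3) * ln P"
    unfolding Let_def P_def r_def s_def qm_def q0_def .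
qed


end
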